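(* Let $\{P_t\}_{t\geq 0}$ be a Markov--Feller semigroup on a Polish space $\mathcal{X}$. If $\{P_t\}_{t\geq 0}$ is asymptotically stable, then it is eventually continuous at every point of $\mathcal{X}$. Similarly, if $\{P_t\}_{t\geq 0}$ is weakly-* mean ergodic, then it is Ces\`aro eventually continuous at every point of $\mathcal{X}$.
   Context: $(\mathcal{X},\rho)$ is a Polish space, $\mathcal{P}(\mathcal{X})$ the Borel probability measures. A Markov--Feller semigroup $\{P_t\}_{t\ge0}$ is a semigroup of mass-preserving positively linear operators on finite Borel measures, each with a dual linear operator on bounded Borel functions ($\langle f,P_t\mu\rangle=\langle P_tf,\mu\rangle$) preserving bounded continuous functions. For $t>0$: $Q_tf=\frac1t\int_0^tP_sf\,ds$, $Q_t\mu=\frac1t\int_0^tP_s\mu\,ds$. Asymptotically stable: unique invariant probability $\mu_*$ with $P_t\mu\to\mu_*$ weakly for all $\mu\in\mathcal{P}(\mathcal{X})$. Weakly-* mean ergodic: unique invariant probability $\mu_*$ with $Q_t\mu\to\mu_*$ weakly for all $\mu\in\mathcal{P}(\mathcal{X})$. Eventually continuous at $z$: for every bounded Lipschitz $f$, $\limsup_{x\to z}\limsup_{t\to\infty}|P_tf(x)-P_tf(z)|=0$; Ces\`aro eventually continuous: the same with $Q_t$ in place of $P_t$. *)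

theory Defs
  imports "HOL-Probability.Probability"
begin

definition finite_borel_measure :: "'a::topological_space measure \<Rightarrow> bool" where
  "finite_borel_measure \<mu> \<longleftrightarrow> sets \<mu> = sets borel \<and> finite_measure \<mu>"

definition prob_borel_measure :: "'a::topological_space measure \<Rightarrow> bool" where
  "prob_borel_measure \<mu> \<longleftrightarrow> sets \<mu> = sets borel \<and> prob_space \<mu>"

definition bdd_borel_fun :: "('a::topological_space \<Rightarrow> real) \<Rightarrow> bool" where
  "bdd_borel_fun f \<longleftrightarrow> f \<in> borel_measurable borel \<and> bounded (range f)"

definition bdd_cont_fun :: "('a::topological_space \<Rightarrow> real) \<Rightarrow> bool" where
  "bdd_cont_fun f \<longleftrightarrow> continuous_on UNIV f \<and> bounded (range f)"

definition bdd_lipschitz_fun :: "('a::metric_space \<Rightarrow> real) \<Rightarrow> bool" where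
  "bdd_lipschitz_fun f \<longleftrightarrow> bounded (range f) \<and> (\<exists>L. L-lipschitz_on UNIV f)"

definition meas_comb :: "real \<Rightarrow> 'a::topological_space measure \<Rightarrow> real \<Rightarrow> 'a measure \<Rightarrow> 'a measure" where
  "meas_comb a \<mu> b \<nu> = measure_of (space borel) (sets borel)
     (\<lambda>A. ennreal a * emeasure \<mu> A + ennreal b * emeasure \<nu> A)"

text \<open>Pm t is the action of P_t on finite Borel measures, Pf t its dual action on
  bounded Borel functions.\<close>
definition markov_feller_semigroup ::
  "(real \<Rightarrow> 'a::topological_space measure \<Rightarrow> 'a measure) \<Rightarrow>
   (real \<Rightarrow> ('a \<Rightarrow> real) \<Rightarrow> ('a \<Rightarrow> real)) \<Rightarrow> bool" where
  "markov_feller_semigroup Pm Pf \<longleftrightarrow>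
     \<comment> \<open>maps finite Borel measures to finite Borel measures, preserving mass\<close>
     (\<forall>t\<ge>0. \<forall>\<mu>. finite_borel_measure \<mu> \<longrightarrow>
        finite_borel_measure (Pm t \<mu>) \<and> emeasure (Pm t \<mu>) (space (Pm t \<mu>)) = emeasure \<mu> (space \<mu>))
   \<comment> \<open>positive linearity\<close>
   \<and> (\<forall>t\<ge>0. \<forall>\<mu> \<nu> a b. finite_borel_measure \<mu> \<and> finite_borel_measure \<nu> \<and> a \<ge> 0 \<and> b \<ge> 0 \<longrightarrow>
        Pm t (meas_comb a \<mu> b \<nu>) = meas_comb a (Pm t \<mu>) b (Pm t \<nu>))
   \<comment> \<open>semigroup property\<close>
   \<and> (\<forall>\<mu>. finite_borel_measure \<mu> \<longrightarrow> Pm 0 \<mu> = \<mu>)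
   \<and> (\<forall>s\<ge>0. \<forall>t\<ge>0. \<forall>\<mu>. finite_borel_measure \<mu> \<longrightarrow> Pm (s + t) \<mu> = Pm t (Pm s \<mu>))
   \<comment> \<open>the dual operator is a linear operator on bounded Borel functions\<close>
   \<and> (\<forall>t\<ge>0. \<forall>f. bdd_borel_fun f \<longrightarrow> bdd_borel_fun (Pf t f))
   \<and> (\<forall>t\<ge>0. \<forall>f g a b. bdd_borel_fun f \<and> bdd_borel_fun g \<longrightarrow>
        Pf t (\<lambda>x. a * f x + b * g x) = (\<lambda>x. a * Pf t f x + b * Pf t g x))
   \<comment> \<open>duality\<close>
   \<and> (\<forall>t\<ge>0. \<forall>f \<mu>. bdd_borel_fun f \<and> finite_borel_measure \<mu> \<longrightarrow>
        (\<integral>x. f x \<partial>(Pm t \<mu>)) = (\<integral>x. Pf t f x \<partial>\<mu>))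
   \<comment> \<open>Feller property\<close>
   \<and> (\<forall>t\<ge>0. \<forall>f. bdd_cont_fun f \<longrightarrow> bdd_cont_fun (Pf t f))"

definition Qf :: "(real \<Rightarrow> ('a \<Rightarrow> real) \<Rightarrow> ('a \<Rightarrow> real)) \<Rightarrow> real \<Rightarrow> ('a \<Rightarrow> real) \<Rightarrow> 'a \<Rightarrow> real" where
  "Qf Pf t f x = (1 / t) * (LINT s:{0..t}|lborel. Pf s f x)"

definition invariant_prob ::
  "(real \<Rightarrow> 'a::topological_space measure \<Rightarrow> 'a measure) \<Rightarrow> 'a measure \<Rightarrow> bool" where
  "invariant_prob Pm \<mu> \<longleftrightarrow> prob_borel_measure \<mu> \<and> (\<forall>t\<ge>0. Pm t \<mu> = \<mu>)"

definition weak_conv_top :: "(real \<Rightarrow> 'a::topological_space measure) \<Rightarrow> 'a measure \<Rightarrow> bool" where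
  "weak_conv_top M N \<longleftrightarrow>
     (\<forall>f. bdd_cont_fun f \<longrightarrow> ((\<lambda>t. \<integral>x. f x \<partial>(M t)) \<longlongrightarrow> (\<integral>x. f x \<partial>N)) at_top)"

definition asymptotically_stable ::
  "(real \<Rightarrow> 'a::topological_space measure \<Rightarrow> 'a measure) \<Rightarrow> bool" where
  "asymptotically_stable Pm \<longleftrightarrow>
     (\<exists>\<mu>s. invariant_prob Pm \<mu>s \<and> (\<forall>\<nu>. invariant_prob Pm \<nu> \<longrightarrow> \<nu> = \<mu>s) \<and>
        (\<forall>\<mu>. prob_borel_measure \<mu> \<longrightarrow> weak_conv_top (\<lambda>t. Pm t \<mu>) \<mu>s))"

text \<open>Weak convergence of Q_t \<mu> = (1/t)\<integral>_0^t P_s \<mu> ds, expressed through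
  the integrals \<langle>f, Q_t \<mu>\<rangle> = (1/t)\<integral>_0^t \<langle>f, P_s \<mu>\<rangle> ds against bounded continuous f.\<close>
definition weak_star_mean_ergodic ::
  "(real \<Rightarrow> 'a::topological_space measure \<Rightarrow> 'a measure) \<Rightarrow> bool" where
  "weak_star_mean_ergodic Pm \<longleftrightarrow>
     (\<exists>\<mu>s. invariant_prob Pm \<mu>s \<and> (\<forall>\<nu>. invariant_prob Pm \<nu> \<longrightarrow> \<nu> = \<mu>s) \<and>
        (\<forall>\<mu>. prob_borel_measure \<mu> \<longrightarrow>
           (\<forall>f. bdd_cont_fun f \<longrightarrow>
              ((\<lambda>t. (1 / t) * (LINT s:{0..t}|lborel. (\<integral>x. f x \<partial>(Pm s \<mu>))))
                 \<longlongrightarrow> (\<integral>x. f x \<partial>\<mu>s)) at_top)))"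

definition eventually_continuous_at ::
  "(real \<Rightarrow> ('a::metric_space \<Rightarrow> real) \<Rightarrow> ('a \<Rightarrow> real)) \<Rightarrow> 'a \<Rightarrow> bool" where
  "eventually_continuous_at Pf z \<longleftrightarrow>
     (\<forall>f. bdd_lipschitz_fun f \<longrightarrow>
        Limsup (nhds z) (\<lambda>x. Limsup at_top (\<lambda>t. ereal \<bar>Pf t f x - Pf t f z\<bar>)) = 0)"

definition cesaro_eventually_continuous_at ::
  "(real \<Rightarrow> ('a::metric_space \<Rightarrow> real) \<Rightarrow> ('a \<Rightarrow> real)) \<Rightarrow> 'a \<Rightarrow> bool" where
  "cesaro_eventually_continuous_at Pf z \<longleftrightarrow>
     (\<forall>f. bdd_lipschitz_fun f \<longrightarrow>
        Limsup (nhds z) (\<lambda>x. Limsup at_top (\<lambda>t. ereal \<bar>Qf Pf t f x - Qf Pf t f z\<bar>)) = 0)"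

end

theory Submission
  imports Defs
begin

lemma key_limsup:
  fixes g :: "real \<Rightarrow> 'a::metric_space \<Rightarrow> real"
  assumes "\<And>x. ((\<lambda>t. g t x) \<longlongrightarrow> L) at_top"
  shows "Limsup (nhds z) (\<lambda>x. Limsup at_top (\<lambda>t. ereal \<bar>g t x - g t z\<bar>)) = 0"
proof -
  have "Limsup at_top (\<lambda>t. ereal \<bar>g t x - g t z\<bar>) = 0" for x
  proof -
    have "((\<lambda>t. \<bar>g t x - g t z\<bar>) \<longlongrightarrow> \<bar>L - L\<bar>) at_top"
      by (intro tendsto_intros assms)
    hence "((\<lambda>t. ereal \<bar>g t x - g t z\<bar>) \<longlongrightarrow> ereal 0) at_top"
      by (intro tendsto_ereal) simp
    hence "Limsup at_top (\<lambda>t. ereal \<bar>g t x - g t z\<bar>) = ereal 0"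
      by (intro lim_imp_Limsup) simp_all
    thus ?thesis by (simp add: zero_ereal_def)
  qed
  thus ?thesis by (simp add: Limsup_const)
qed

lemma lip_borel:
  assumes "bdd_lipschitz_fun (f :: 'a::metric_space \<Rightarrow> real)"
  shows "bdd_borel_fun f" "f \<in> borel_measurable borel"
proof -
  from assms obtain L where "L-lipschitz_on UNIV f" "bounded (range f)"
    unfolding bdd_lipschitz_fun_def by blast
  hence "continuous_on UNIV f" using lipschitz_on_continuous_on by blast
  thus "f \<in> borel_measurable borel" by (rule borel_measurable_continuous_onI)
  thus "bdd_borel_fun f" using \<open>bounded (range f)\<close> unfolding bdd_borel_fun_def by blast
qed

lemma dirac_facts:
  "finite_borel_measure (return borel (x::'a::topological_space))"
  "prob_borel_measure (return borel x)"
proof -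
  have "prob_space (return borel x)" by (rule prob_space_return) simp
  thus "finite_borel_measure (return borel x)" "prob_borel_measure (return borel x)"
    unfolding finite_borel_measure_def prob_borel_measure_def
    by (auto simp: prob_space.finite_measure)
qed

lemma dual_dirac:
  fixes Pm :: "real \<Rightarrow> 'a::polish_space measure \<Rightarrow> 'a measure"
  assumes mf: "markov_feller_semigroup Pm Pf" and f: "bdd_lipschitz_fun f" and t: "t \<ge> 0"
  shows "(\<integral>y. f y \<partial>(Pm t (return borel x))) = Pf t f x"
proof -
  have bf: "bdd_borel_fun f" using lip_borel[OF f] by simp
  have "bdd_borel_fun (Pf t f)" using mf bf t unfolding markov_feller_semigroup_def by blast
  hence m: "Pf t f \<in> borel_measurable borel" unfolding bdd_borel_fun_def by blast
  have "(\<integral>y. f y \<partial>(Pm t (return borel x))) = (\<integral>y. Pf t f y \<partial>(return borel x))"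
    using mf bf t dirac_facts(1)[of x] unfolding markov_feller_semigroup_def by blast
  also have "\<dots> = Pf t f x" by (rule integral_return) (auto simp: m)
  finally show ?thesis .
qed

lemma bl_cont: "bdd_lipschitz_fun f \<Longrightarrow> bdd_cont_fun f"
  unfolding bdd_lipschitz_fun_def bdd_cont_fun_def
  using lipschitz_on_continuous_on by blast

theorem proposition2p11:
  fixes Pm :: "real \<Rightarrow> 'a::polish_space measure \<Rightarrow> 'a measure"
    and Pf :: "real \<Rightarrow> ('a \<Rightarrow> real) \<Rightarrow> ('a \<Rightarrow> real)"
  assumes "markov_feller_semigroup Pm Pf"
  shows "(asymptotically_stable Pm \<longrightarrow> (\<forall>z. eventually_continuous_at Pf z))
       \<and> (weak_star_mean_ergodic Pm \<longrightarrow> (\<forall>z. cesaro_eventually_continuous_at Pf z))"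
proof (intro conjI impI allI)
  fix z
  assume "asymptotically_stable Pm"
  then obtain \<mu>s where conv: "\<And>\<mu>. prob_borel_measure \<mu> \<Longrightarrow> weak_conv_top (\<lambda>t. Pm t \<mu>) \<mu>s"
    unfolding asymptotically_stable_def by blast
  show "eventually_continuous_at Pf z"
    unfolding eventually_continuous_at_def
  proof (intro allI impI)
    fix f :: "'a \<Rightarrow> real" assume f: "bdd_lipschitz_fun f"
    show "Limsup (nhds z) (\<lambda>x. Limsup at_top (\<lambda>t. ereal \<bar>Pf t f x - Pf t f z\<bar>)) = 0"
    proof (rule key_limsup)
      fix x
      have "((\<lambda>t. \<integral>y. f y \<partial>(Pm t (return borel x))) \<longlongrightarrow> (\<integral>y. f y \<partial>\<mu>s)) at_top"
        using conv[OF dirac_facts(2)[of x]] bl_cont[OF f] unfolding weak_conv_top_def by blast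
      moreover have "eventually (\<lambda>t. (\<integral>y. f y \<partial>(Pm t (return borel x))) = Pf t f x) at_top"
        using eventually_ge_at_top[of "0::real"]
        by eventually_elim (rule dual_dirac[OF assms f])
      ultimately show "((\<lambda>t. Pf t f x) \<longlongrightarrow> (\<integral>y. f y \<partial>\<mu>s)) at_top"
        by (rule Lim_transform_eventually)
    qed
  qed
next
  fix z
  assume "weak_star_mean_ergodic Pm"
  then obtain \<mu>s where conv: "\<And>\<mu> f. prob_borel_measure \<mu> \<Longrightarrow> bdd_cont_fun f \<Longrightarrow>
      ((\<lambda>t. (1 / t) * (LINT s:{0..t}|lborel. (\<integral>x. f x \<partial>(Pm s \<mu>)))) \<longlongrightarrow> (\<integral>x. f x \<partial>\<mu>s)) at_top"
    unfolding weak_star_mean_ergodic_def by blast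
  show "cesaro_eventually_continuous_at Pf z"
    unfolding cesaro_eventually_continuous_at_def
  proof (intro allI impI)
    fix f :: "'a \<Rightarrow> real" assume f: "bdd_lipschitz_fun f"
    show "Limsup (nhds z) (\<lambda>x. Limsup at_top (\<lambda>t. ereal \<bar>Qf Pf t f x - Qf Pf t f z\<bar>)) = 0"
    proof (rule key_limsup)
      fix x
      have "(\<lambda>t. (1 / t) * (LINT s:{0..t}|lborel. (\<integral>y. f y \<partial>(Pm s (return borel x)))))
          = (\<lambda>t. Qf Pf t f x)"
      proof
        fix t :: real
        have "(LINT s:{0..t}|lborel. (\<integral>y. f y \<partial>(Pm s (return borel x))))
            = (LINT s:{0..t}|lborel. Pf s f x)"
          by (rule set_lebesgue_integral_cong) (simp_all add: dual_dirac[OF assms f])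
        thus "(1 / t) * (LINT s:{0..t}|lborel. (\<integral>y. f y \<partial>(Pm s (return borel x)))) = Qf Pf t f x"
          unfolding Qf_def by simp
      qed
      moreover have "((\<lambda>t. (1 / t) * (LINT s:{0..t}|lborel. (\<integral>y. f y \<partial>(Pm s (return borel x)))))
          \<longlongrightarrow> (\<integral>y. f y \<partial>\<mu>s)) at_top"
        using conv[OF dirac_facts(2)[of x] bl_cont[OF f]] .
      ultimately show "((\<lambda>t. Qf Pf t f x) \<longlongrightarrow> (\<integral>y. f y \<partial>\<mu>s)) at_top" by (metis (no_types))
    qed
  qed
qed

end
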